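(* Let $\Gamma$ be a reduct of $(\mathbb{Z};<)$ with qe-degree $q$, let $\kappa_1,\kappa_2$ be linear orders, let $S\subseteq\kappa_1.\mathbb{Z}$, and let $f,g\colon S\to\kappa_2.\mathbb{Z}$ satisfy $f\sim_q g$. Then $f$ is a homomorphism from $(\kappa_1.\Gamma)[S]$ to $\kappa_2.\Gamma$ if and only if $g$ is.
   Context: For a linear order $\kappa$, $\kappa.\mathbb{Z}=\kappa\times\mathbb{Z}$ with the lexicographic order; $(a,z)+k=(a,z+k)$. For $x,y\in\kappa.\mathbb{Z}$: $x-y=k\in\mathbb{Z}$ if $x=y+k$, and $x-y=\pm\infty$ if $x,y$ lie in different copies (sign $+$ iff $x>y$). For a reduct $\Gamma$ of $(\mathbb{Z};<)$, $\kappa.\Gamma$ interprets each relation symbol by the relation defined over $(\kappa.\mathbb{Z};<)$ by a first-order formula defining it over $(\mathbb{Z};<)$; $(\kappa.\Gamma)[S]$ is the induced substructure on $S$. The qe-degree of a relation $R$ first-order definable in $(\mathbb{Z};<)$ is the least $q$ such that $R$ has a quantifier-free definition in which every atomic formula has the form $x<y+k$ or $x\le y+k$ with $k\in\mathbb{Z}$, $|k|\le q$; the qe-degree of $\Gamma$ is the supremum over its relations. For $f\colon S\to\kappa.\mathbb{Z}$ and $s\in\mathbb{N}$, $x,y\in S$ are $(f,s)$-connected if there is a sequence $x=u_1,\dots,u_k=y$ in $S$ with $|f(u_i)-f(u_{i+1})|\le s$ for all $i$. For $f,g\colon S\to\kappa.\mathbb{Z}$, $f\sim_s g$ means: $(f,s)$-connectivity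 and $(g,s)$-connectivity coincide; for $(f,s)$-connected $x,y$ we have $f(x)-f(y)=g(x)-g(y)$; and for $x,y$ not $(f,s)$-connected, $f(x)<f(y)\iff g(x)<g(y)$. *)

theory Defs
  imports Main "HOL-Library.Extended_Real"
begin

datatype fm = FLt nat nat | FEq nat nat | FNeg fm | FConj fm fm | FEx nat fm

fun fv :: "fm \<Rightarrow> nat set" where
  "fv (FLt i j) = {i, j}"
| "fv (FEq i j) = {i, j}"
| "fv (FNeg p) = fv p"
| "fv (FConj p r) = fv p \<union> fv r"
| "fv (FEx i p) = fv p - {i}"

fun feval :: "('d \<Rightarrow> 'd \<Rightarrow> bool) \<Rightarrow> (nat \<Rightarrow> 'd) \<Rightarrow> fm \<Rightarrow> bool" where
  "feval lt e (FLt i j) = lt (e i) (e j)"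
| "feval lt e (FEq i j) = (e i = e j)"
| "feval lt e (FNeg p) = (\<not> feval lt e p)"
| "feval lt e (FConj p r) = (feval lt e p \<and> feval lt e r)"
| "feval lt e (FEx i p) = (\<exists>a. feval lt (e(i := a)) p)"

text \<open>kappa.Z = kappa \<times> int with the lexicographic order.\<close>
definition klt :: "('a::linorder \<times> int) \<Rightarrow> ('a \<times> int) \<Rightarrow> bool" where
  "klt x y \<longleftrightarrow> fst x < fst y \<or> (fst x = fst y \<and> snd x < snd y)"

definition kdiff :: "('a::linorder \<times> int) \<Rightarrow> ('a \<times> int) \<Rightarrow> ereal" where
  "kdiff x y = (if fst x = fst y then ereal (real_of_int (snd x - snd y))
               else if klt y x then \<infinity> else - \<infinity>)"

text \<open>A reduct Gamma of (Z;<) is given by its relations, each presented as a pair (n, phi):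
  an n-ary relation defined over (Z;<) by the first-order formula phi with free
  variables among x_0..x_{n-1}.  The relation of Gamma is
  {t \<in> Z^n. (Z;<) |= phi(t)} and the relation of kappa.Gamma is
  {t \<in> (kappa.Z)^n. (kappa.Z;<) |= phi(t)}.\<close>
type_synonym reduct = "(nat \<times> fm) set"

definition is_reduct :: "reduct \<Rightarrow> bool" where
  "is_reduct \<Gamma> \<longleftrightarrow> (\<forall>(n, \<phi>) \<in> \<Gamma>. fv \<phi> \<subseteq> {..<n})"

datatype qf = QTrue | QLt nat nat int | QLe nat nat int | QNeg qf | QConj qf qf

fun qeval :: "(nat \<Rightarrow> int) \<Rightarrow> qf \<Rightarrow> bool" where
  "qeval e QTrue = True"
| "qeval e (QLt i j k) = (e i < e j + k)"
| "qeval e (QLe i j k) = (e i \<le> e j + k)"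
| "qeval e (QNeg p) = (\<not> qeval e p)"
| "qeval e (QConj p r) = (qeval e p \<and> qeval e r)"

fun qvars :: "qf \<Rightarrow> nat set" where
  "qvars QTrue = {}"
| "qvars (QLt i j k) = {i, j}"
| "qvars (QLe i j k) = {i, j}"
| "qvars (QNeg p) = qvars p"
| "qvars (QConj p r) = qvars p \<union> qvars r"

fun qbound :: "qf \<Rightarrow> nat" where
  "qbound QTrue = 0"
| "qbound (QLt i j k) = nat \<bar>k\<bar>"
| "qbound (QLe i j k) = nat \<bar>k\<bar>"
| "qbound (QNeg p) = qbound p"
| "qbound (QConj p r) = max (qbound p) (qbound r)"

definition qf_definable_bound :: "nat \<Rightarrow> fm \<Rightarrow> nat \<Rightarrow> bool" where
  "qf_definable_bound n \<phi> q \<longleftrightarrow>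
     (\<exists>\<psi>. qvars \<psi> \<subseteq> {..<n} \<and> qbound \<psi> \<le> q \<and>
        (\<forall>t :: int list. length t = n \<longrightarrow>
            (feval (<) (\<lambda>i. t ! i) \<phi> \<longleftrightarrow> qeval (\<lambda>i. t ! i) \<psi>)))"

definition rel_qe_degree :: "nat \<Rightarrow> fm \<Rightarrow> nat" where
  "rel_qe_degree n \<phi> = (LEAST q. qf_definable_bound n \<phi> q)"

definition has_qe_degree :: "reduct \<Rightarrow> nat \<Rightarrow> bool" where
  "has_qe_degree \<Gamma> q \<longleftrightarrow>
     (\<forall>(n, \<phi>) \<in> \<Gamma>. rel_qe_degree n \<phi> \<le> q) \<and>
     (\<forall>q'. (\<forall>(n, \<phi>) \<in> \<Gamma>. rel_qe_degree n \<phi> \<le> q') \<longrightarrow> q \<le> q')"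

definition is_hom :: "reduct \<Rightarrow> ('a::linorder \<times> int) set \<Rightarrow> ('a \<times> int \<Rightarrow> 'b::linorder \<times> int) \<Rightarrow> bool" where
  "is_hom \<Gamma> S f \<longleftrightarrow>
     (\<forall>(n, \<phi>) \<in> \<Gamma>. \<forall>t. length t = n \<longrightarrow> set t \<subseteq> S \<longrightarrow>
        feval klt (\<lambda>i. t ! i) \<phi> \<longrightarrow> feval klt (\<lambda>i. map f t ! i) \<phi>)"

definition fs_connected :: "('a \<times> int) set \<Rightarrow> ('a \<times> int \<Rightarrow> 'b::linorder \<times> int) \<Rightarrow> nat
    \<Rightarrow> 'a \<times> int \<Rightarrow> 'a \<times> int \<Rightarrow> bool" where
  "fs_connected S f s x y \<longleftrightarrow> x \<in> S \<and> y \<in> S \<and>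
     (\<lambda>u v. u \<in> S \<and> v \<in> S \<and> \<bar>kdiff (f u) (f v)\<bar> \<le> ereal (real s))\<^sup>*\<^sup>* x y"

definition sim_s :: "('a \<times> int) set \<Rightarrow> nat \<Rightarrow> ('a \<times> int \<Rightarrow> 'b::linorder \<times> int)
    \<Rightarrow> ('a \<times> int \<Rightarrow> 'b \<times> int) \<Rightarrow> bool" where
  "sim_s S s f g \<longleftrightarrow>
     (\<forall>x\<in>S. \<forall>y\<in>S. fs_connected S f s x y \<longleftrightarrow> fs_connected S g s x y) \<and>
     (\<forall>x\<in>S. \<forall>y\<in>S. fs_connected S f s x y \<longrightarrow> kdiff (f x) (f y) = kdiff (g x) (g y)) \<and>
     (\<forall>x\<in>S. \<forall>y\<in>S. \<not> fs_connected S f s x y \<longrightarrow> (klt (f x) (f y) \<longleftrightarrow> klt (g x) (g y)))"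

end

theory Submission
  imports Defs "HOL-Library.Product_Lexorder"
begin

lemma klt_less: "klt x y \<longleftrightarrow> x < y"
  by (simp add: klt_def less_prod_def')

lemma kdiff_self[simp]: "kdiff x x = 0"
  by (simp add: kdiff_def zero_ereal_def)

lemma kdiff_swap: "kdiff y x = - kdiff x y"
  by (auto simp: kdiff_def klt_def)

lemma kdiff_eq0: "kdiff x y = 0 \<longleftrightarrow> x = y"
  by (cases x; cases y) (auto simp: kdiff_def zero_ereal_def)

lemma kdiff_pos: "kdiff x y > 0 \<longleftrightarrow> y < x"
  by (cases x; cases y) (auto simp: kdiff_def klt_less less_prod_def')

lemma kdiff_neg: "kdiff x y < 0 \<longleftrightarrow> x < y"
  using kdiff_pos[of y x] kdiff_swap[of x y] by (metis ereal_uminus_less_reorder neg_0_equal_iff_equal uminus_ereal.simps(1) zero_ereal_def)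

lemma kdiff_fin_trans:
  assumes "kdiff x y = ereal m"
  shows "kdiff x z = ereal m + kdiff y z"
proof -
  have "fst x = fst y" using assms by (auto simp: kdiff_def split: if_splits)
  then show ?thesis using assms
    by (cases x; cases y; cases z) (auto simp: kdiff_def klt_def)
qed

lemma kdiff_shift: "kdiff (fst x, snd x + m) y = ereal (real_of_int m) + kdiff x y"
  by (rule kdiff_fin_trans) (simp add: kdiff_def)

lemma kdiff_mono1:
  assumes "x \<le> y" shows "kdiff x z \<le> kdiff y z"
  using assms
  by (cases x; cases y; cases z) (auto simp: kdiff_def klt_def less_eq_prod_def)

lemma kdiff_mono2:
  assumes "x \<le> y" shows "kdiff z y \<le> kdiff z x"
  using kdiff_mono1[OF assms, of z] by (simp add: kdiff_swap[of _ z])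

definition clip :: "nat \<Rightarrow> ereal \<Rightarrow> ereal" where
  "clip N d = (if d > ereal (real N) then ereal (real N + 1)
     else if d < - ereal (real N) then - ereal (real N + 1) else d)"

lemma clip_thr:
  assumes "clip N d = clip N d'" "\<bar>k\<bar> \<le> int N"
  shows "(d < ereal (real_of_int k) \<longleftrightarrow> d' < ereal (real_of_int k)) \<and>
         (d \<le> ereal (real_of_int k) \<longleftrightarrow> d' \<le> ereal (real_of_int k))"
proof -
  have k: "- real N \<le> real_of_int k" "real_of_int k \<le> real N" using assms(2) by linarith+
  show ?thesis using assms(1) k
    by (cases d; cases d') (auto simp: clip_def split: if_splits)
qed

lemma clip_neg: "clip N (- d) = - clip N d"
  by (cases d) (auto simp: clip_def)

lemma clip_mono:
  assumes "clip N d = clip N d'" "M \<le> N"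
  shows "clip M d = clip M d'"
proof -
  have "real M \<le> real N" using assms(2) by simp
  then show ?thesis using assms(1)
    by (cases d; cases d') (auto simp: clip_def split: if_splits)
qed

lemma clip_shift:
  assumes "clip (2*N+1) d = clip (2*N+1) d'" "\<bar>m\<bar> \<le> int N"
  shows "clip N (ereal (real_of_int m) + d) = clip N (ereal (real_of_int m) + d')"
proof -
  have k: "- real N \<le> real_of_int m" "real_of_int m \<le> real N" using assms(2) by linarith+
  show ?thesis using assms(1) k
    by (cases d; cases d') (auto simp: clip_def split: if_splits)
qed

definition agr :: "nat \<Rightarrow> nat set \<Rightarrow> (nat \<Rightarrow> 'a::linorder \<times> int) \<Rightarrow> (nat \<Rightarrow> 'b::linorder \<times> int) \<Rightarrow> bool" where
  "agr N V e e' \<longleftrightarrow> (\<forall>i\<in>V. \<forall>j\<in>V. clip N (kdiff (e i) (e j)) = clip N (kdiff (e' i) (e' j)))"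

lemma agr_sym: "agr N V e e' \<Longrightarrow> agr N V e' e"
  by (simp add: agr_def)

lemma agr_mono: "agr N V e e' \<Longrightarrow> M \<le> N \<Longrightarrow> W \<subseteq> V \<Longrightarrow> agr M W e e'"
  unfolding agr_def using clip_mono by blast

lemma kdiff_int_gt:
  assumes "kdiff x y > ereal (real_of_int k)"
  shows "kdiff x y \<ge> ereal (real_of_int (k+1))"
proof -
  have "\<And>a b c::int. real_of_int a - real_of_int b > real_of_int c \<Longrightarrow> real_of_int c + 1 \<le> real_of_int a - real_of_int b"
    by (metis of_int_1 of_int_add of_int_diff of_int_le_iff of_int_less_iff zless_imp_add1_zle)
  then show ?thesis using assms by (auto simp: kdiff_def split: if_splits)
qed

lemma kdiff_int_lt:
  assumes "kdiff x y < ereal (real_of_int k)"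
  shows "kdiff x y \<le> ereal (real_of_int (k - 1))"
proof -
  have "\<And>a b c::int. real_of_int a - real_of_int b < real_of_int c \<Longrightarrow> real_of_int a - real_of_int b \<le> real_of_int c - 1"
    by (metis of_int_1 of_int_diff of_int_le_iff of_int_less_iff zle_diff1_eq)
  then show ?thesis using assms by (auto simp: kdiff_def split: if_splits)
qed

lemma kdiff_add:
  assumes "y \<le> x" "z \<le> y"
  shows "kdiff x z = kdiff x y + kdiff y z"
  using assms
  by (cases x; cases y; cases z) (auto simp: kdiff_def klt_def less_eq_prod_def)

lemma kdiff_fin:
  assumes "\<bar>kdiff x y\<bar> \<le> ereal (real N)"
  shows "\<exists>m. kdiff x y = ereal (real_of_int m) \<and> \<bar>m\<bar> \<le> int N"
proof -
  have f: "fst x = fst y" using assms by (auto simp: kdiff_def split: if_splits)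
  define m where "m = snd x - snd y"
  have k: "kdiff x y = ereal (real_of_int m)" using f by (simp add: kdiff_def m_def)
  then have "\<bar>real_of_int m\<bar> \<le> real N" using assms by simp
  then have "\<bar>m\<bar> \<le> int N" by (metis of_int_abs of_int_le_iff of_int_of_nat_eq)
  then show ?thesis using k by blast
qed

lemma ext_core:
  fixes e :: "nat \<Rightarrow> 'a::linorder \<times> int" and e' :: "nat \<Rightarrow> 'b::linorder \<times> int"
  assumes ag: "agr (2*N+1) V e e'" and fin: "finite V"
  shows "\<exists>a'. \<forall>i\<in>V. clip N (kdiff a (e i)) = clip N (kdiff a' (e' i))"
proof (cases "\<exists>i0\<in>V. \<bar>kdiff a (e i0)\<bar> \<le> ereal (real N)")
  case True
  then obtain i0 where i0: "i0 \<in> V" "\<bar>kdiff a (e i0)\<bar> \<le> ereal (real N)" by blast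
  then obtain m where m: "kdiff a (e i0) = ereal (real_of_int m)" "\<bar>m\<bar> \<le> int N"
    using kdiff_fin by blast
  define a' where "a' = (fst (e' i0), snd (e' i0) + m)"
  have "clip N (kdiff a (e i)) = clip N (kdiff a' (e' i))" if "i \<in> V" for i
  proof -
    have "kdiff a (e i) = ereal (real_of_int m) + kdiff (e i0) (e i)"
      by (rule kdiff_fin_trans[OF m(1)])
    moreover have "kdiff a' (e' i) = ereal (real_of_int m) + kdiff (e' i0) (e' i)"
      unfolding a'_def by (rule kdiff_shift)
    moreover have "clip (2*N+1) (kdiff (e i0) (e i)) = clip (2*N+1) (kdiff (e' i0) (e' i))"
      using ag i0(1) that by (simp add: agr_def)
    ultimately show ?thesis using clip_shift m(2) by metis
  qed
  then show ?thesis by blast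
next
  case False
  define L where "L = {i\<in>V. e i < a}"
  define U where "U = {i\<in>V. a < e i}"
  have far: "\<bar>kdiff a (e i)\<bar> > ereal (real N)" if "i \<in> V" for i
    using False that by auto
  have Lgt: "kdiff a (e i) > ereal (real N)" if "i \<in> L" for i
  proof -
    have "kdiff a (e i) > 0" using that by (simp add: L_def kdiff_pos)
    then show ?thesis using far[of i] that L_def by (cases "kdiff a (e i)") auto
  qed
  have Ult: "kdiff a (e i) < - ereal (real N)" if "i \<in> U" for i
  proof -
    have "kdiff a (e i) < 0" using that by (simp add: U_def kdiff_neg)
    then show ?thesis using far[of i] that U_def by (cases "kdiff a (e i)") auto
  qed
  have VLU: "V = L \<union> U"
  proof -
    have "e i \<noteq> a" if "i \<in> V" for i using far[OF that] by auto
    then show ?thesis unfolding L_def U_def by (auto simp: neq_iff)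
  qed
  have finL: "finite L" and finU: "finite U" using fin VLU by auto
  have suff: "\<exists>a'. \<forall>i\<in>V. clip N (kdiff a (e i)) = clip N (kdiff a' (e' i))"
    if hL: "\<forall>i\<in>L. kdiff a' (e' i) > ereal (real N)"
    and hU: "\<forall>i\<in>U. kdiff a' (e' i) < - ereal (real N)" for a'
  proof (intro exI ballI)
    fix i assume "i \<in> V"
    then have "i \<in> L \<or> i \<in> U" using VLU by auto
    then show "clip N (kdiff a (e i)) = clip N (kdiff a' (e' i))"
    proof
      assume "i \<in> L"
      then show ?thesis using Lgt[of i] hL by (simp add: clip_def)
    next
      assume iU: "i \<in> U"
      have nn: "- ereal (real N) \<le> ereal (real N)" by simp
      have "\<not> kdiff a (e i) > ereal (real N)" "\<not> kdiff a' (e' i) > ereal (real N)"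
        using Ult[OF iU] hU iU nn order_less_le_trans less_asym by blast+
      then show ?thesis using Ult[OF iU] hU iU by (simp add: clip_def)
    qed
  qed
  have lmax: "\<exists>l\<in>L. \<forall>i\<in>L. e' i \<le> e' l" if "L \<noteq> {}"
  proof -
    have "Max (e' ` L) \<in> e' ` L" using finL that by simp
    then obtain l where "l \<in> L" "e' l = Max (e' ` L)" by auto
    then show ?thesis using finL by (metis Max_ge finite_imageI image_eqI)
  qed
  have umin: "\<exists>u\<in>U. \<forall>i\<in>U. e' u \<le> e' i" if "U \<noteq> {}"
  proof -
    have "Min (e' ` U) \<in> e' ` U" using finU that by simp
    then obtain u where "u \<in> U" "e' u = Min (e' ` U)" by auto
    then show ?thesis using finU by (metis Min_le finite_imageI image_eqI)
  qed
  have candL: "\<forall>i\<in>L. kdiff (fst (e' l), snd (e' l) + int N + 1) (e' i) > ereal (real N)"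
    if "l \<in> L" "\<forall>i\<in>L. e' i \<le> e' l" for l
  proof
    fix i assume "i \<in> L"
    have "kdiff (fst (e' l), snd (e' l) + (int N + 1)) (e' i) = ereal (real_of_int (int N + 1)) + kdiff (e' l) (e' i)"
      by (rule kdiff_shift)
    moreover have "kdiff (e' l) (e' i) \<ge> 0"
      using kdiff_mono2[of "e' i" "e' l" "e' l"] that \<open>i \<in> L\<close> by simp
    ultimately show "kdiff (fst (e' l), snd (e' l) + int N + 1) (e' i) > ereal (real N)"
      by (cases "kdiff (e' l) (e' i)") (auto simp: add.assoc)
  qed
  have candU: "\<forall>i\<in>U. kdiff (fst (e' u), snd (e' u) + (- int N - 1)) (e' i) < - ereal (real N)"
    if "u \<in> U" "\<forall>i\<in>U. e' u \<le> e' i" for u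
  proof
    fix i assume "i \<in> U"
    have "kdiff (fst (e' u), snd (e' u) + (- int N - 1)) (e' i) = ereal (real_of_int (- int N - 1)) + kdiff (e' u) (e' i)"
      by (rule kdiff_shift)
    moreover have "kdiff (e' u) (e' i) \<le> 0"
      using kdiff_mono2[of "e' u" "e' i" "e' u"] that \<open>i \<in> U\<close> by simp
    ultimately show "kdiff (fst (e' u), snd (e' u) + (- int N - 1)) (e' i) < - ereal (real N)"
      by (cases "kdiff (e' u) (e' i)") auto
  qed
  show ?thesis
  proof (cases "L = {}")
    case Lempty: True
    show ?thesis
    proof (cases "U = {}")
      case True
      then show ?thesis using Lempty VLU by auto
    next
      case False
      then obtain u where "u \<in> U" "\<forall>i\<in>U. e' u \<le> e' i" using umin by blast
      then show ?thesis using suff candU Lempty by blast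
    qed
  next
    case Lne: False
    then obtain l where l: "l \<in> L" "\<forall>i\<in>L. e' i \<le> e' l" using lmax by blast
    show ?thesis
    proof (cases "U = {}")
      case True
      then show ?thesis using suff candL[OF l] by blast
    next
      case False
      then obtain u where u: "u \<in> U" "\<forall>i\<in>U. e' u \<le> e' i" using umin by blast
      define a' where "a' = (fst (e' l), snd (e' l) + int N + 1)"
      have gap: "kdiff (e u) (e l) > ereal (real (2*N+1))"
      proof -
        have "e l \<le> a" "a \<le> e u" using l u by (auto simp: L_def U_def)
        then have "kdiff (e u) (e l) = kdiff (e u) a + kdiff a (e l)" by (rule kdiff_add[rotated])
        moreover have "kdiff a (e l) \<ge> ereal (real_of_int (int N + 1))"
          using kdiff_int_gt[where x=a and y="e l" and k="int N"] Lgt[OF l(1)] by simp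
        moreover have "kdiff (e u) a \<ge> ereal (real_of_int (int N + 1))"
        proof -
          have "kdiff (e u) a > ereal (real_of_int (int N))"
            using Ult[OF u(1)] kdiff_swap[of "e u" a]
            by (cases "kdiff a (e u)") auto
          then show ?thesis using kdiff_int_gt by blast
        qed
        ultimately show ?thesis
          by (cases "kdiff (e u) a"; cases "kdiff a (e l)") auto
      qed
      have "u \<in> V" "l \<in> V" using u l VLU by auto
      then have "clip (2*N+1) (kdiff (e u) (e l)) = clip (2*N+1) (kdiff (e' u) (e' l))"
        using ag by (simp add: agr_def)
      then have gap': "kdiff (e' u) (e' l) > ereal (real (2*N+1))"
        using gap by (cases "kdiff (e' u) (e' l)") (auto simp: clip_def split: if_splits)
      have hU: "\<forall>i\<in>U. kdiff a' (e' i) < - ereal (real N)"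
      proof
        fix i assume "i \<in> U"
        have "kdiff a' (e' i) \<le> kdiff a' (e' u)"
          using kdiff_mono2 u(2) \<open>i \<in> U\<close> by blast
        moreover have "kdiff a' (e' u) = ereal (real_of_int (int N + 1)) + kdiff (e' l) (e' u)"
          unfolding a'_def using kdiff_shift[of "e' l" "int N + 1"] by (simp add: add.assoc)
        moreover have "kdiff (e' l) (e' u) < - ereal (real (2*N+1))"
          using gap' kdiff_swap[of "e' l" "e' u"] by (cases "kdiff (e' u) (e' l)") auto
        ultimately show "kdiff a' (e' i) < - ereal (real N)"
          by (cases "kdiff (e' l) (e' u)"; cases "kdiff a' (e' i)") auto
      qed
      show ?thesis using suff[OF _ hU] candL[OF l] unfolding a'_def by blast
    qed
  qed
qed

lemma agr_extend:
  fixes e :: "nat \<Rightarrow> 'a::linorder \<times> int" and e' :: "nat \<Rightarrow> 'b::linorder \<times> int"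
  assumes ag: "agr (2*N+1) V e e'" and fin: "finite V"
  shows "\<exists>a'. agr N (insert x V) (e(x:=a)) (e'(x:=a'))"
proof -
  let ?V0 = "V - {x}"
  have ag0: "agr (2*N+1) ?V0 e e'" using agr_mono[OF ag] by auto
  obtain a' where a': "\<forall>i\<in>?V0. clip N (kdiff a (e i)) = clip N (kdiff a' (e' i))"
    using ext_core[OF ag0] fin by blast
  have agN: "agr N ?V0 e e'" using agr_mono[OF ag0] by auto
  have "agr N (insert x V) (e(x:=a)) (e'(x:=a'))"
    unfolding agr_def
  proof (intro ballI)
    fix i j assume i: "i \<in> insert x V" and j: "j \<in> insert x V"
    show "clip N (kdiff ((e(x := a)) i) ((e(x := a)) j)) = clip N (kdiff ((e'(x := a')) i) ((e'(x := a')) j))"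
    proof (cases "i = x")
      case True
      then show ?thesis
      proof (cases "j = x")
        case True then show ?thesis using \<open>i = x\<close> by simp
      next
        case False then show ?thesis using \<open>i = x\<close> a' j by auto
      qed
    next
      case False
      then show ?thesis
      proof (cases "j = x")
        case True then show ?thesis using False a' i
          by (auto simp: kdiff_swap[of _ a] kdiff_swap[of _ a'] clip_neg)
      next
        case False then show ?thesis using \<open>i \<noteq> x\<close> agN i j by (auto simp: agr_def)
      qed
    qed
  qed
  then show ?thesis by blast
qed

lemma exists_agr:
  fixes e :: "nat \<Rightarrow> 'a::linorder \<times> int"
  assumes "finite V"
  shows "\<exists>e' :: nat \<Rightarrow> 'b::linorder \<times> int. agr N V e e'"
  using assms
proof (induction V arbitrary: N rule: finite_induct)
  case empty then show ?case by (simp add: agr_def)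
next
  case (insert x V)
  obtain e' :: "nat \<Rightarrow> 'b \<times> int" where "agr (2*N+1) V e e'" using insert.IH by blast
  then obtain a' where "agr N (insert x V) (e(x:=e x)) (e'(x:=a'))"
    using agr_extend insert.hyps(1) by blast
  then show ?case by auto
qed

fun qd :: "fm \<Rightarrow> nat" where
  "qd (FLt i j) = 0"
| "qd (FEq i j) = 0"
| "qd (FNeg p) = qd p"
| "qd (FConj p r) = max (qd p) (qd r)"
| "qd (FEx i p) = Suc (qd p)"

fun bd :: "nat \<Rightarrow> nat" where
  "bd 0 = 0"
| "bd (Suc d) = 2 * bd d + 1"

lemma bd_mono': "mono bd"
  by (rule mono_iff_le_Suc[THEN iffD2]) auto

lemma bd_mono: "d \<le> d' \<Longrightarrow> bd d \<le> bd d'"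
  using bd_mono' monoD by blast

lemma EF:
  fixes e :: "nat \<Rightarrow> 'a::linorder \<times> int" and e' :: "nat \<Rightarrow> 'b::linorder \<times> int"
  assumes "agr N (fv \<phi>) e e'" "bd (qd \<phi>) \<le> N"
  shows "feval klt e \<phi> = feval klt e' \<phi>"
  using assms
proof (induction \<phi> arbitrary: N e e')
  case (FLt i j)
  then have c: "clip N (kdiff (e i) (e j)) = clip N (kdiff (e' i) (e' j))" by (simp add: agr_def)
  have "kdiff (e i) (e j) < 0 \<longleftrightarrow> kdiff (e' i) (e' j) < 0"
    using clip_thr[OF c, of 0] by (simp add: zero_ereal_def)
  then show ?case by (simp add: klt_less flip: kdiff_neg)
next
  case (FEq i j)
  then have c: "clip N (kdiff (e i) (e j)) = clip N (kdiff (e' i) (e' j))" by (simp add: agr_def)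
  have t: "(kdiff (e i) (e j) < 0 \<longleftrightarrow> kdiff (e' i) (e' j) < 0) \<and> (kdiff (e i) (e j) \<le> 0 \<longleftrightarrow> kdiff (e' i) (e' j) \<le> 0)"
    using clip_thr[OF c, of 0] by (simp add: zero_ereal_def)
  have eq: "\<And>x::ereal. x = 0 \<longleftrightarrow> x \<le> 0 \<and> \<not> x < 0" by auto
  have "(kdiff (e i) (e j) = 0) \<longleftrightarrow> (kdiff (e' i) (e' j) = 0)"
    using t by (simp only: eq)
  then show ?case by (simp add: kdiff_eq0)
next
  case (FNeg p) then show ?case by simp
next
  case (FConj p r)
  have a1: "agr N (fv p) e e'" using agr_mono[OF FConj.prems(1), of N "fv p"] by simp
  have a2: "agr N (fv r) e e'" using agr_mono[OF FConj.prems(1), of N "fv r"] by simp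
  have b1: "bd (qd p) \<le> N" using bd_mono[of "qd p" "max (qd p) (qd r)"] FConj.prems(2) by simp
  have b2: "bd (qd r) \<le> N" using bd_mono[of "qd r" "max (qd p) (qd r)"] FConj.prems(2) by simp
  have "feval klt e p = feval klt e' p" by (rule FConj.IH(1)[OF a1 b1])
  moreover have "feval klt e r = feval klt e' r" by (rule FConj.IH(2)[OF a2 b2])
  ultimately show ?case by simp
next
  case (FEx i p)
  let ?M = "bd (qd p)"
  have ag: "agr (2*?M+1) (fv p - {i}) e e'" using FEx.prems by (auto intro: agr_mono)
  have fin: "finite (fv p - {i})" by (induction p) auto
  have sub: "fv p \<subseteq> insert i (fv p - {i})" by auto
  show ?case
  proof
    assume "feval klt e (FEx i p)"
    then obtain a where a: "feval klt (e(i:=a)) p" by auto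
    obtain a' where "agr ?M (insert i (fv p - {i})) (e(i:=a)) (e'(i:=a'))"
      using agr_extend[OF ag fin] by blast
    then have "agr ?M (fv p) (e(i:=a)) (e'(i:=a'))" using agr_mono[OF _ order.refl sub] by blast
    then have "feval klt (e'(i:=a')) p" using FEx.IH[OF _ order.refl] a by blast
    then show "feval klt e' (FEx i p)" by (simp only: feval.simps(5)) (rule exI)
  next
    assume "feval klt e' (FEx i p)"
    then obtain a' where a': "feval klt (e'(i:=a')) p" by auto
    obtain a where "agr ?M (insert i (fv p - {i})) (e'(i:=a')) (e(i:=a))"
      using agr_extend[OF agr_sym[OF ag] fin] by blast
    then have "agr ?M (fv p) (e'(i:=a')) (e(i:=a))" using agr_mono[OF _ order.refl sub] by blast
    then have "agr ?M (fv p) (e(i:=a)) (e'(i:=a'))" by (rule agr_sym)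
    then have "feval klt (e(i:=a)) p" using FEx.IH[OF _ order.refl] a' by blast
    then show "feval klt e (FEx i p)" by (simp only: feval.simps(5)) (rule exI)
  qed
qed

lemma feval_iso: "feval (<) e \<phi> = feval klt (\<lambda>i. ((), e i)) \<phi>"
proof (induction \<phi> arbitrary: e)
  case (FEx i p)
  have upd: "\<And>a. (\<lambda>j. ((), (e(i:=a)) j)) = (\<lambda>j. ((), e j))(i := ((), a))" by auto
  show ?case
  proof
    assume "feval (<) e (FEx i p)"
    then obtain a where "feval (<) (e(i:=a)) p" by auto
    then have "feval klt ((\<lambda>j. ((), e j))(i := ((), a))) p" using FEx.IH upd by metis
    then show "feval klt (\<lambda>i. ((), e i)) (FEx i p)" by (simp only: feval.simps(5)) (rule exI)
  next
    assume "feval klt (\<lambda>i. ((), e i)) (FEx i p)"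
    then obtain b where "feval klt ((\<lambda>j. ((), e j))(i := b)) p" by (simp only: feval.simps(5)) blast
    moreover have "b = ((), snd b)" by (cases b) auto
    ultimately have "feval klt ((\<lambda>j. ((), e j))(i := ((), snd b))) p" by metis
    then have "feval (<) (e(i:=snd b)) p" using FEx.IH upd by metis
    then show "feval (<) e (FEx i p)" by auto
  qed
qed (auto simp: klt_def)

fun qevalx :: "(nat \<Rightarrow> 'b::linorder \<times> int) \<Rightarrow> qf \<Rightarrow> bool" where
  "qevalx e QTrue = True"
| "qevalx e (QLt i j k) = (kdiff (e i) (e j) < ereal (real_of_int k))"
| "qevalx e (QLe i j k) = (kdiff (e i) (e j) \<le> ereal (real_of_int k))"
| "qevalx e (QNeg p) = (\<not> qevalx e p)"
| "qevalx e (QConj p r) = (qevalx e p \<and> qevalx e r)"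

lemma of_int_lt3: "(real_of_int a - real_of_int b < real_of_int k) \<longleftrightarrow> a < b + k"
  by (metis diff_less_eq of_int_add of_int_less_iff add.commute)

lemma of_int_le3: "(real_of_int a - real_of_int b \<le> real_of_int k) \<longleftrightarrow> a \<le> b + k"
  by (metis diff_le_eq of_int_add of_int_le_iff add.commute)

lemma kdiff_unit: "kdiff ((), a) ((), b) = ereal (real_of_int a - real_of_int b)"
  by (simp add: kdiff_def)

lemma qevalx_iso: "qevalx (\<lambda>i. ((), e i)) \<psi> = qeval e \<psi>"
  by (induction \<psi>) (auto simp: kdiff_unit of_int_lt3 of_int_le3)

lemma qevalx_agr:
  assumes "agr N V u w" "qvars \<psi> \<subseteq> V" "qbound \<psi> \<le> N"
  shows "qevalx u \<psi> = qevalx w \<psi>"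
  using assms
proof (induction \<psi>)
  case (QLt i j k)
  then have c: "clip N (kdiff (u i) (u j)) = clip N (kdiff (w i) (w j))" by (simp add: agr_def)
  have "\<bar>k\<bar> \<le> int N" using QLt.prems(3) by simp
  then show ?case using clip_thr[OF c] by simp
next
  case (QLe i j k)
  then have c: "clip N (kdiff (u i) (u j)) = clip N (kdiff (w i) (w j))" by (simp add: agr_def)
  have "\<bar>k\<bar> \<le> int N" using QLe.prems(3) by simp
  then show ?case using clip_thr[OF c] by simp
qed auto

fun qconj :: "qf list \<Rightarrow> qf" where
  "qconj [] = QTrue"
| "qconj (p # ps) = QConj p (qconj ps)"

definition qdisj :: "qf list \<Rightarrow> qf" where
  "qdisj ps = QNeg (qconj (map QNeg ps))"

lemma qconj_eval: "qeval e (qconj ps) \<longleftrightarrow> (\<forall>p\<in>set ps. qeval e p)"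
  by (induction ps) auto
lemma qconj_vars: "qvars (qconj ps) = (\<Union>p\<in>set ps. qvars p)"
  by (induction ps) auto
lemma qconj_bound: "\<forall>p\<in>set ps. qbound p \<le> B \<Longrightarrow> qbound (qconj ps) \<le> B"
  by (induction ps) auto
lemma qdisj_eval: "qeval e (qdisj ps) \<longleftrightarrow> (\<exists>p\<in>set ps. qeval e p)"
  by (simp add: qdisj_def qconj_eval)
lemma qdisj_vars: "qvars (qdisj ps) = (\<Union>p\<in>set ps. qvars p)"
  by (simp add: qdisj_def qconj_vars)
lemma qdisj_bound: "\<forall>p\<in>set ps. qbound p \<le> B \<Longrightarrow> qbound (qdisj ps) \<le> B"
  unfolding qdisj_def by (simp add: qconj_bound)

definition iclip :: "nat \<Rightarrow> int \<Rightarrow> int" where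
  "iclip N d = max (- (int N + 1)) (min (int N + 1) d)"

lemma clip_iclip: "clip N (ereal (real_of_int d)) = ereal (real_of_int (iclip N d))"
proof -
  have "real_of_int d > real N \<longleftrightarrow> d > int N" by linarith
  moreover have "real_of_int d < - real N \<longleftrightarrow> d < - int N" by linarith
  ultimately show ?thesis by (auto simp: clip_def iclip_def)
qed

definition catom :: "nat \<Rightarrow> nat \<Rightarrow> nat \<Rightarrow> int \<Rightarrow> qf" where
  "catom N i j c = (if c > int N then QNeg (QLe i j (int N))
     else if c < - int N then QLt i j (- int N)
     else QConj (QLe i j c) (QNeg (QLt i j c)))"

lemma catom_eval:
  assumes "- (int N + 1) \<le> c" "c \<le> int N + 1"
  shows "qeval e (catom N i j c) \<longleftrightarrow> iclip N (e i - e j) = c"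
  using assms by (auto simp: catom_def iclip_def)

lemma catom_vars: "qvars (catom N i j c) = {i, j}"
  by (auto simp: catom_def)

lemma catom_bound: "qbound (catom N i j c) \<le> N"
  by (auto simp: catom_def)

lemma map_eq_list_all2: "map F xs = ys \<longleftrightarrow> list_all2 (\<lambda>x y. F x = y) xs ys"
  by (induction xs arbitrary: ys) (auto simp: list_all2_Cons1)

lemma qe_exists:
  assumes fvs: "fv \<phi> \<subseteq> {..<n}"
  shows "qf_definable_bound n \<phi> (bd (qd \<phi>))"
proof -
  define N where "N = bd (qd \<phi>)"
  define prs where "prs = List.product [0..<n] [0..<n]"
  define pat where "pat = (\<lambda>t::int list. map (\<lambda>(i,j). iclip N (t!i - t!j)) prs)"
  have inv: "feval (<) (\<lambda>i. s!i) \<phi> = feval (<) (\<lambda>i. t!i) \<phi>" if st: "pat s = pat t" for s t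
  proof -
    have "agr N {..<n} (\<lambda>i. ((), s!i)) (\<lambda>i. ((), t!i))"
      unfolding agr_def
    proof (intro ballI)
      fix i j assume "i \<in> {..<n}" "j \<in> {..<n}"
      then have "(i,j) \<in> set prs" by (simp add: prs_def)
      then have "iclip N (s!i - s!j) = iclip N (t!i - t!j)" using st unfolding pat_def
        by (auto simp: map_eq_conv)
      then show "clip N (kdiff ((), s!i) ((), s!j)) = clip N (kdiff ((), t!i) ((), t!j))"
        by (simp add: kdiff_unit clip_iclip flip: of_int_diff)
    qed
    then have "agr N (fv \<phi>) (\<lambda>i. ((), s!i)) (\<lambda>i. ((), t!i))" using agr_mono fvs by blast
    then have "feval klt (\<lambda>i. ((), s!i)) \<phi> = feval klt (\<lambda>i. ((), t!i)) \<phi>"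
      using EF N_def by blast
    then show ?thesis using feval_iso by metis
  qed
  define C where "C = pat ` {t. length t = n \<and> feval (<) (\<lambda>i. t!i) \<phi>}"
  define R where "R = {xs. set xs \<subseteq> {-(int N+1)..int N+1} \<and> length xs = length prs}"
  have patin: "pat t \<in> R" for t by (auto simp: pat_def iclip_def R_def)
  have "finite R" unfolding R_def by (rule finite_lists_length_eq) simp
  then have "finite C" unfolding C_def using patin by (meson finite_subset image_subsetI)
  then obtain cs where cs: "set cs = C" using finite_list by blast
  define form where "form c = qconj (map (\<lambda>((i,j),v). catom N i j v) (zip prs c))" for c
  define \<psi> where "\<psi> = qdisj (map form cs)"
  have form_eval: "qeval (\<lambda>i. t!i) (form c) \<longleftrightarrow> pat t = c" if "c \<in> R" for c t
  proof -
    have len: "length c = length prs" and rng: "set c \<subseteq> {-(int N+1)..int N+1}" using that by (auto simp: R_def)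
    have "qeval (\<lambda>i. t!i) (form c) \<longleftrightarrow> (\<forall>x\<in>set (zip prs c). case x of ((i,j),v) \<Rightarrow> qeval (\<lambda>i. t!i) (catom N i j v))"
      by (auto simp: form_def qconj_eval)
    also have "\<dots> \<longleftrightarrow> (\<forall>x\<in>set (zip prs c). case x of ((i,j),v) \<Rightarrow> iclip N (t!i - t!j) = v)"
    proof -
      have "qeval (\<lambda>i. t!i) (catom N i j v) \<longleftrightarrow> iclip N (t!i - t!j) = v" if "((i,j),v) \<in> set (zip prs c)" for i j v
      proof -
        have "v \<in> set c" using that by (rule set_zip_rightD)
        then show ?thesis using rng catom_eval[of N v "\<lambda>i. t!i" i j] by auto
      qed
      then show ?thesis by fastforce
    qed
    also have "\<dots> \<longleftrightarrow> list_all2 (\<lambda>x y. (case x of (i,j) \<Rightarrow> iclip N (t!i - t!j)) = y) prs c"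
      using len by (auto simp: list_all2_iff split: prod.splits)
    also have "\<dots> \<longleftrightarrow> pat t = c" unfolding pat_def map_eq_list_all2 by simp
    finally show ?thesis .
  qed
  have CR: "C \<subseteq> R" unfolding C_def using patin by blast
  have ev: "qeval (\<lambda>i. t!i) \<psi> \<longleftrightarrow> feval (<) (\<lambda>i. t!i) \<phi>" if "length t = n" for t :: "int list"
  proof -
    have "qeval (\<lambda>i. t!i) \<psi> \<longleftrightarrow> (\<exists>c\<in>C. pat t = c)"
      unfolding \<psi>_def qdisj_eval using cs CR form_eval by auto
    also have "\<dots> \<longleftrightarrow> feval (<) (\<lambda>i. t!i) \<phi>"
    proof
      assume "\<exists>c\<in>C. pat t = c"
      then obtain s where "length s = n" "feval (<) (\<lambda>i. s!i) \<phi>" "pat s = pat t"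
        unfolding C_def by auto
      then show "feval (<) (\<lambda>i. t!i) \<phi>" using inv by blast
    qed (use that in \<open>auto simp: C_def\<close>)
    finally show ?thesis .
  qed
  have vars: "qvars \<psi> \<subseteq> {..<n}"
  proof -
    have "qvars (form c) \<subseteq> {..<n}" for c
    proof -
      have "qvars (catom N i j v) \<subseteq> {..<n}" if "((i,j),v) \<in> set (zip prs c)" for i j v
        using set_zip_leftD[OF that] by (auto simp: catom_vars prs_def)
      then show ?thesis by (auto simp: form_def qconj_vars)
    qed
    then show ?thesis by (auto simp: \<psi>_def qdisj_vars)
  qed
  have bnd: "qbound \<psi> \<le> N"
    unfolding \<psi>_def by (rule qdisj_bound) (auto simp: form_def intro!: qconj_bound catom_bound)
  show ?thesis unfolding qf_definable_bound_def N_def[symmetric] using vars bnd ev by blast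
qed

lemma transfer:
  fixes u :: "nat \<Rightarrow> 'b::linorder \<times> int"
  assumes fvs: "fv \<phi> \<subseteq> {..<n}" and qv: "qvars \<psi> \<subseteq> {..<n}" and qb: "qbound \<psi> \<le> B"
    and eq: "\<forall>t::int list. length t = n \<longrightarrow> (feval (<) (\<lambda>i. t ! i) \<phi> \<longleftrightarrow> qeval (\<lambda>i. t ! i) \<psi>)"
  shows "feval klt u \<phi> \<longleftrightarrow> qevalx u \<psi>"
proof -
  define N where "N = max (bd (qd \<phi>)) B"
  obtain w :: "nat \<Rightarrow> unit \<times> int" where w: "agr N {..<n} u w" using exists_agr by blast
  define s where "s = map (\<lambda>i. snd (w i)) [0..<n]"
  have ws: "w i = ((), s!i)" if "i < n" for i using that by (simp add: s_def prod_eq_iff)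
  have ag: "agr N {..<n} u (\<lambda>i. ((), s!i))" using w ws by (simp add: agr_def)
  have "feval klt u \<phi> = feval klt (\<lambda>i. ((), s!i)) \<phi>"
    using EF[OF agr_mono[OF ag order.refl fvs]] N_def by simp
  also have "\<dots> = feval (<) (\<lambda>i. s!i) \<phi>" using feval_iso by metis
  also have "\<dots> = qeval (\<lambda>i. s!i) \<psi>" using eq by (simp add: s_def)
  also have "\<dots> = qevalx (\<lambda>i. ((), s!i)) \<psi>" using qevalx_iso by metis
  also have "\<dots> = qevalx u \<psi>" using qevalx_agr[OF agr_sym[OF ag] qv] qb N_def by simp
  finally show ?thesis .
qed

lemma far_thr:
  assumes "\<not> \<bar>d\<bar> \<le> ereal (real q)" "\<bar>k\<bar> \<le> int q"
  shows "(d < ereal (real_of_int k) \<longleftrightarrow> d < 0) \<and> (d \<le> ereal (real_of_int k) \<longleftrightarrow> d < 0)"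
proof -
  have k: "- real q \<le> real_of_int k" "real_of_int k \<le> real q" using assms(2) by linarith+
  show ?thesis using assms(1) k by (cases d) auto
qed

lemma sim_atom:
  assumes sim: "sim_s S q f g" and xy: "x \<in> S" "y \<in> S" and k: "\<bar>k\<bar> \<le> int q"
  shows "(kdiff (f x) (f y) < ereal (real_of_int k) \<longleftrightarrow> kdiff (g x) (g y) < ereal (real_of_int k)) \<and>
         (kdiff (f x) (f y) \<le> ereal (real_of_int k) \<longleftrightarrow> kdiff (g x) (g y) \<le> ereal (real_of_int k))"
proof (cases "fs_connected S f q x y")
  case True
  then show ?thesis using sim xy by (simp add: sim_s_def)
next
  case False
  then have ng: "\<not> fs_connected S g q x y" using sim xy by (simp add: sim_s_def)
  have ord: "klt (f x) (f y) \<longleftrightarrow> klt (g x) (g y)" using sim xy False by (simp add: sim_s_def)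
  have ff: "\<not> \<bar>kdiff (f x) (f y)\<bar> \<le> ereal (real q)"
    using False xy unfolding fs_connected_def by (auto intro: r_into_rtranclp)
  have gg: "\<not> \<bar>kdiff (g x) (g y)\<bar> \<le> ereal (real q)"
    using ng xy unfolding fs_connected_def by (auto intro: r_into_rtranclp)
  show ?thesis using far_thr[OF ff k] far_thr[OF gg k] ord by (simp add: kdiff_neg klt_less)
qed

lemma sim_sym: "sim_s S q f g \<Longrightarrow> sim_s S q g f"
  unfolding sim_s_def
  apply (elim conjE)
  apply (intro conjI ballI impI)
    apply blast
   apply (metis)
  apply (metis)
  done

lemma qevalx_sim:
  assumes sim: "sim_s S q f g" and qv: "qvars \<psi> \<subseteq> {..<n}" and qb: "qbound \<psi> \<le> q"
    and t: "length t = n" "set t \<subseteq> S"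
  shows "qevalx (\<lambda>i. map f t ! i) \<psi> = qevalx (\<lambda>i. map g t ! i) \<psi>"
  using qv qb
proof (induction \<psi>)
  case (QLt i j k)
  then have ij: "i < n" "j < n" and kk: "\<bar>k\<bar> \<le> int q" by auto
  then have "t!i \<in> S" "t!j \<in> S" using t nth_mem by auto
  from sim_atom[OF sim this kk] show ?case using ij t by simp
next
  case (QLe i j k)
  then have ij: "i < n" "j < n" and kk: "\<bar>k\<bar> \<le> int q" by auto
  then have "t!i \<in> S" "t!j \<in> S" using t nth_mem by auto
  from sim_atom[OF sim this kk] show ?case using ij t by simp
qed auto

lemma hom_dir:
  fixes \<Gamma> :: reduct and q :: nat
    and S :: "('a::linorder \<times> int) set"
    and f g :: "'a \<times> int \<Rightarrow> 'b::linorder \<times> int"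
  assumes red: "is_reduct \<Gamma>" and deg: "has_qe_degree \<Gamma> q" and sim: "sim_s S q f g"
    and hf: "is_hom \<Gamma> S f"
  shows "is_hom \<Gamma> S g"
proof -
  have one: "feval klt (\<lambda>i. map g t ! i) \<phi>"
    if mem: "(n, \<phi>) \<in> \<Gamma>" and len: "length t = n" and tS: "set t \<subseteq> S"
    and ft: "feval klt (\<lambda>i. t ! i) \<phi>" for n \<phi> and t :: "('a \<times> int) list"
  proof -
  have fvs: "fv \<phi> \<subseteq> {..<n}" using red mem by (auto simp: is_reduct_def)
  have "qf_definable_bound n \<phi> (rel_qe_degree n \<phi>)"
    unfolding rel_qe_degree_def by (rule LeastI[where P="\<lambda>q. qf_definable_bound n \<phi> q", OF qe_exists[OF fvs]])
  moreover have "rel_qe_degree n \<phi> \<le> q" using deg mem by (auto simp: has_qe_degree_def)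
  ultimately obtain \<psi> where qv: "qvars \<psi> \<subseteq> {..<n}" and qb: "qbound \<psi> \<le> q"
    and eq: "\<forall>t::int list. length t = n \<longrightarrow> (feval (<) (\<lambda>i. t ! i) \<phi> \<longleftrightarrow> qeval (\<lambda>i. t ! i) \<psi>)"
    unfolding qf_definable_bound_def by fastforce
  have "feval klt (\<lambda>i. map f t ! i) \<phi>" using hf mem len tS ft by (auto simp: is_hom_def)
  then have "qevalx (\<lambda>i. map f t ! i) \<psi>" using transfer[OF fvs qv qb eq] by blast
  then have "qevalx (\<lambda>i. map g t ! i) \<psi>" using qevalx_sim[OF sim qv qb len tS] by simp
  then show "feval klt (\<lambda>i. map g t ! i) \<phi>" using transfer[OF fvs qv qb eq] by blast
  qed
  show ?thesis unfolding is_hom_def using one by blast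
qed

theorem mainTheorem6:
  fixes \<Gamma> :: reduct and q :: nat
    and S :: "('a::linorder \<times> int) set"
    and f g :: "'a \<times> int \<Rightarrow> 'b::linorder \<times> int"
  assumes "is_reduct \<Gamma>"
    and "has_qe_degree \<Gamma> q"
    and "sim_s S q f g"
  shows "is_hom \<Gamma> S f \<longleftrightarrow> is_hom \<Gamma> S g"
  using hom_dir[OF assms] hom_dir[OF assms(1,2) sim_sym[OF assms(3)]] by blast

end
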